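(* Let $H$ be a real or complex Hilbert space of dimension $n$, let $N\ge n$, let $F=\{f_i\}_{i=1}^N$ be a frame for $H$ with frame operator $S_F$, and let $\{q_i\}_{i=1}^N$ be a weight number sequence. Set $c=\max\{q_i\|f_i\|\,\|S_F^{-1}f_i\|:1\le i\le N\}$, $\varrho_1=\{i:q_i\|f_i\|\,\|S_F^{-1}f_i\|=c\}$, $\varrho_2=\{1,\dots,N\}\setminus\varrho_1$, and $H_j=\operatorname{span}\{f_i:i\in\varrho_j\}$ for $j=1,2$. If $H_1\cap H_2=\{0\}$, then the canonical dual $\{S_F^{-1}f_i\}_{i=1}^N$ is a 1-erasure probabilistic optimal dual of $F$.
   Context: Inner products are linear in the first argument. A frame for $H$ is a finite sequence spanning $H$. Analysis operator: $\Theta_F f=(\langle f,f_i\rangle)_i$. Synthesis operator: $\Theta_G^*(c)=\sum_ic_ig_i$. Frame operator: $S_F=\Theta_F^*\Theta_F$. A dual of $F$ is a frame $G=\{g_i\}_{i=1}^N$ with $f=\sum_i\langle f,f_i\rangle g_i=\sum_i\langle f,g_i\rangle f_i$ for all $f$. A probability sequence satisfies $0\le p_i\le1$ and $\sum p_i=1$. Weight numbers: $q_i=\frac{\sum_jp_j}{\sum_jp_j-p_i}\cdot\frac{N-1}{n}$ (assumed well defined). $\mathcal{D}_1^p$ is the set of $N\times N$ diagonal matrices with exactly one nonzero diagonal entry, equal to $q_i$ in position $(i,i)$. $d_1^p(F,G)=\max\{\|\Theta_G^*D\Theta_F\|:D\in\mathcal{D}_1^p\}$ (operator norm); this equals $\max_i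 q_i\|f_i\|\,\|g_i\|$. A dual $G$ of $F$ is a 1-erasure probabilistic optimal dual of $F$ if $d_1^p(F,G)=\inf\{d_1^p(F,G'):G'\text{ a dual of }F\}$. *)

theory Defs
  imports "HOL-Analysis.Analysis"
begin

text \<open>The n-dimensional Hilbert space H is modelled (up to isometric isomorphism) as
  'k^'n with 'k = real or 'k = complex and the standard inner product, linear in the
  first argument.  The frame is indexed by 0..N-1.  All notions below are parametrised
  by the inner product ip.\<close>

definition rip :: "real^'n \<Rightarrow> real^'n \<Rightarrow> real" where
  "rip x y = (\<Sum>i\<in>UNIV. x$i * y$i)"

definition cip :: "complex^'n \<Rightarrow> complex^'n \<Rightarrow> complex" where
  "cip x y = (\<Sum>i\<in>UNIV. x$i * cnj (y$i))"

definition is_frame :: "nat \<Rightarrow> (nat \<Rightarrow> 'k::field^'n) \<Rightarrow> bool" where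
  "is_frame N F \<longleftrightarrow> vec.span (F ` {..<N}) = UNIV"

definition analysis_op :: "('k^'n \<Rightarrow> 'k^'n \<Rightarrow> 'k) \<Rightarrow> nat \<Rightarrow> (nat \<Rightarrow> 'k::field^'n) \<Rightarrow> 'k^'n \<Rightarrow> (nat \<Rightarrow> 'k)" where
  "analysis_op ip N F f = (\<lambda>i. if i < N then ip f (F i) else 0)"

definition synthesis_op :: "nat \<Rightarrow> (nat \<Rightarrow> 'k::field^'n) \<Rightarrow> (nat \<Rightarrow> 'k) \<Rightarrow> 'k^'n" where
  "synthesis_op N G c = (\<Sum>i<N. c i *s G i)"

definition frame_op :: "('k^'n \<Rightarrow> 'k^'n \<Rightarrow> 'k) \<Rightarrow> nat \<Rightarrow> (nat \<Rightarrow> 'k::field^'n) \<Rightarrow> 'k^'n \<Rightarrow> 'k^'n" where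
  "frame_op ip N F = synthesis_op N F \<circ> analysis_op ip N F"

definition canonical_dual :: "('k^'n \<Rightarrow> 'k^'n \<Rightarrow> 'k) \<Rightarrow> nat \<Rightarrow> (nat \<Rightarrow> 'k::field^'n) \<Rightarrow> nat \<Rightarrow> 'k^'n" where
  "canonical_dual ip N F = (\<lambda>i. inv (frame_op ip N F) (F i))"

definition is_dual :: "('k^'n \<Rightarrow> 'k^'n \<Rightarrow> 'k) \<Rightarrow> nat \<Rightarrow> (nat \<Rightarrow> 'k::field^'n) \<Rightarrow> (nat \<Rightarrow> 'k^'n) \<Rightarrow> bool" where
  "is_dual ip N F G \<longleftrightarrow> is_frame N G \<and>
     (\<forall>f. f = (\<Sum>i<N. ip f (F i) *s G i) \<and> f = (\<Sum>i<N. ip f (G i) *s F i))"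

definition prob_seq :: "nat \<Rightarrow> (nat \<Rightarrow> real) \<Rightarrow> bool" where
  "prob_seq N p \<longleftrightarrow> (\<forall>i<N. 0 \<le> p i \<and> p i \<le> 1) \<and> (\<Sum>i<N. p i) = 1"

definition weight :: "nat \<Rightarrow> nat \<Rightarrow> (nat \<Rightarrow> real) \<Rightarrow> nat \<Rightarrow> real" where
  "weight n N p i = (\<Sum>j<N. p j) / ((\<Sum>j<N. p j) - p i) * (real N - 1) / real n"

text \<open>The diagonal matrix in D_1^p whose only nonzero entry is q_i at position (i,i),
  acting on sequences.\<close>
definition diag1 :: "nat \<Rightarrow> nat \<Rightarrow> (nat \<Rightarrow> real) \<Rightarrow> nat \<Rightarrow> (nat \<Rightarrow> 'k::real_normed_algebra_1) \<Rightarrow> (nat \<Rightarrow> 'k)" where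
  "diag1 n N p i c = (\<lambda>j. if j = i then of_real (weight n N p i) * c j else 0)"

definition d1p :: "('k^'n \<Rightarrow> 'k^'n \<Rightarrow> 'k) \<Rightarrow> nat \<Rightarrow> (nat \<Rightarrow> real) \<Rightarrow> (nat \<Rightarrow> 'k::{field,real_normed_algebra_1}^'n) \<Rightarrow> (nat \<Rightarrow> 'k^'n) \<Rightarrow> real" where
  "d1p ip N p F G = Max ((\<lambda>i. onorm (synthesis_op N G \<circ> diag1 CARD('n) N p i \<circ> analysis_op ip N F)) ` {..<N})"

definition prob_optimal_dual :: "('k^'n \<Rightarrow> 'k^'n \<Rightarrow> 'k) \<Rightarrow> nat \<Rightarrow> (nat \<Rightarrow> real) \<Rightarrow> (nat \<Rightarrow> 'k::{field,real_normed_algebra_1}^'n) \<Rightarrow> (nat \<Rightarrow> 'k^'n) \<Rightarrow> bool" where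
  "prob_optimal_dual ip N p F G \<longleftrightarrow> is_dual ip N F G \<and>
     d1p ip N p F G = Inf {d1p ip N p F G' | G'. is_dual ip N F G'}"

definition split_condition :: "('k^'n \<Rightarrow> 'k^'n \<Rightarrow> 'k) \<Rightarrow> nat \<Rightarrow> (nat \<Rightarrow> real) \<Rightarrow> (nat \<Rightarrow> 'k::{field,real_normed_algebra_1}^'n) \<Rightarrow> bool" where
  "split_condition ip N p F \<longleftrightarrow>
    (let a = (\<lambda>i. weight CARD('n) N p i * norm (F i) * norm (canonical_dual ip N F i));
         c = Max (a ` {..<N});
         \<rho>1 = {i\<in>{..<N}. a i = c};
         \<rho>2 = {..<N} - \<rho>1
     in vec.span (F ` \<rho>1) \<inter> vec.span (F ` \<rho>2) = {0})"

end

theory Submission imports Defs begin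

definition ipg :: "('k::field \<Rightarrow> 'k) \<Rightarrow> 'k^'n \<Rightarrow> 'k^'n \<Rightarrow> 'k" where
  "ipg cj x y = (\<Sum>i\<in>UNIV. x$i * cj (y$i))"

locale conjf =
  fixes cj :: "'k::{real_normed_field, real_inner} \<Rightarrow> 'k" and re :: "'k \<Rightarrow> real"
  assumes cj_add: "\<And>a b. cj (a + b) = cj a + cj b"
  and cj_mult: "\<And>a b. cj (a * b) = cj a * cj b"
  and cj_cj: "\<And>a. cj (cj a) = a"
  and cj_norm: "\<And>a. norm (cj a) = norm a"
  and cj_self: "\<And>a. a * cj a = of_real (norm a ^ 2)"
  and re_add: "\<And>a b. re (a + b) = re a + re b"
  and re_inner: "\<And>a b. re (a * cj b) = inner a b"
  and re_of_real: "\<And>r. re (of_real r) = r"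
begin

abbreviation ip :: "'k^'n \<Rightarrow> 'k^'n \<Rightarrow> 'k" where "ip \<equiv> ipg cj"

lemma cj_0[simp]: "cj 0 = 0" using cj_add[of 0 0] by simp
lemma cj_1[simp]: "cj 1 = 1" using cj_self[of 1] by simp
lemma re_0[simp]: "re 0 = 0" using re_add[of 0 0] by simp
lemma re_sum: "re (sum f A) = (\<Sum>x\<in>A. re (f x))"
  by (induction A rule: infinite_finite_induct) (auto simp: re_add)
lemma cj_sum: "cj (sum f A) = (\<Sum>x\<in>A. cj (f x))"
  by (induction A rule: infinite_finite_induct) (auto simp: cj_add)

lemma ip_add_left: "ip (x + y) z = ip x z + ip y z"
  by (simp add: ipg_def distrib_right sum.distrib)
lemma ip_scale_left: "ip (a *s x) z = a * ip x z"
  by (simp add: ipg_def sum_distrib_left mult.assoc)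
lemma ip_zero_left[simp]: "ip 0 z = 0" by (simp add: ipg_def)
lemma ip_sum_left: "ip (sum f A) z = (\<Sum>x\<in>A. ip (f x) z)"
  by (induction A rule: infinite_finite_induct) (auto simp: ip_add_left)
lemma ip_sym: "ip x y = cj (ip y x)"
  by (simp add: ipg_def cj_sum cj_mult cj_cj mult.commute)
lemma ip_diff_left: "ip (x - y) z = ip x z - ip y z"
  using ip_add_left[of "x - y" y z] by simp

lemma re_ip: "re (ip x y) = inner x y"
  by (simp add: ipg_def re_sum re_inner inner_vec_def)

lemma norm_sq_vec: "norm (x::'k^'n) ^ 2 = (\<Sum>i\<in>UNIV. norm (x$i) ^ 2)"
  by (simp add: power2_norm_eq_inner inner_vec_def)

lemma ip_self: "ip x x = of_real (norm x ^ 2)"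
  by (simp add: ipg_def cj_self norm_sq_vec)

lemma ip_cs: "norm (ip x y) \<le> norm x * norm y"
proof -
  have "norm (ip x y) \<le> (\<Sum>i\<in>UNIV. norm (x$i * cj (y$i)))"
    unfolding ipg_def by (rule norm_sum)
  also have "\<dots> = (\<Sum>i\<in>UNIV. \<bar>norm (x$i)\<bar> * \<bar>norm (y$i)\<bar>)"
    by (simp add: norm_mult cj_norm)
  also have "\<dots> \<le> L2_set (\<lambda>i. norm (x$i)) UNIV * L2_set (\<lambda>i. norm (y$i)) UNIV"
    by (rule L2_set_mult_ineq)
  finally show ?thesis by (simp add: norm_vec_def)
qed

lemma norm_smult: "norm (a *s (x::'k^'n)) = norm a * norm x"
proof -
  have "norm (a *s x) ^ 2 = (norm a * norm x) ^ 2"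
    by (simp add: norm_sq_vec norm_mult power_mult_distrib sum_distrib_left)
  then show ?thesis by (simp add: power2_eq_iff_nonneg)
qed

lemma scaleR_smult: "scaleR r (x::'k^'n) = of_real r *s x"
  unfolding vec_eq_iff by (intro allI) (simp only: vector_scaleR_component vector_smult_component scaleR_conv_of_real[where 'a='k])

lemma ip_axis_left: "ip (axis k 1) y = cj (y$k)"
proof -
  have "\<And>i. (axis k 1)$i * cj (y$i) = (if i = k then cj (y$k) else 0)"
    by (simp add: axis_def)
  then show ?thesis by (simp add: ipg_def)
qed


lemma frame_op_eq: "frame_op ip N F x = (\<Sum>i<N. ip x (F i) *s F i)"
  by (simp add: frame_op_def synthesis_op_def analysis_op_def)

lemma S_add: "frame_op ip N F (x + y) = frame_op ip N F x + frame_op ip N F y"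
  by (simp add: frame_op_eq ip_add_left vector_sadd_rdistrib sum.distrib)

lemma S_scale: "frame_op ip N F (a *s x) = a *s frame_op ip N F x"
  by (simp add: frame_op_eq ip_scale_left vec.scale_sum_right vec.scale_scale)

lemma S_linear: "Vector_Spaces.linear (*s) (*s) (frame_op ip N F)"
  by (simp add: Vector_Spaces.linear_iff vec.vector_space_axioms S_add S_scale)

lemma S_ip: "ip (frame_op ip N F x) y = (\<Sum>i<N. ip x (F i) * ip (F i) y)"
  by (simp add: frame_op_eq ip_sum_left ip_scale_left)

lemma S_selfadj: "ip (frame_op ip N F x) y = ip x (frame_op ip N F y)"
proof -
  have "ip x (frame_op ip N F y) = cj (ip (frame_op ip N F y) x)" by (rule ip_sym)
  also have "\<dots> = (\<Sum>i<N. cj (ip y (F i)) * cj (ip (F i) x))"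
    by (simp add: S_ip cj_sum cj_mult)
  also have "\<dots> = (\<Sum>i<N. ip x (F i) * ip (F i) y)"
    by (simp add: ip_sym[of "F i" y for i] ip_sym[of x "F i" for i] cj_cj mult.commute)
  finally show ?thesis by (simp add: S_ip)
qed

lemma ip_span_zero:
  fixes F :: "nat \<Rightarrow> 'k^'n"
  assumes "\<And>i. i < N \<Longrightarrow> ip (F i) z = 0" and "y \<in> vec.span (F ` {..<N})"
  shows "ip y z = 0"
  using assms(2)
proof (induction rule: vec.span_induct_alt)
  case base
  then show ?case by simp
next
  case (step c x y)
  then show ?case using assms(1) by (auto simp: ip_add_left ip_scale_left)
qed

lemma S_inj:
  assumes fr: "is_frame N F"
  shows "inj (frame_op ip N F)"
proof (rule injI)
  fix x y assume eq: "frame_op ip N F x = frame_op ip N F y"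
  define z where "z = x - y"
  have "frame_op ip N F z = 0"
    using eq S_add[where x=z and y=y and N=N and F=F] by (simp add: z_def)
  then have "0 = ip (frame_op ip N F z) z" by simp
  also have "\<dots> = (\<Sum>i<N. of_real (norm (ip z (F i)) ^ 2))"
    by (simp add: S_ip ip_sym[of "F i" z for i] cj_self)
  also have "\<dots> = of_real (\<Sum>i<N. norm (ip z (F i)) ^ 2)" by simp
  finally have "of_real (\<Sum>i<N. norm (ip z (F i)) ^ 2) = (0::'k)" by (rule sym)
  then have "(\<Sum>i<N. norm (ip z (F i)) ^ 2) = 0" by (simp only: of_real_eq_0_iff)
  then have "\<And>i. i < N \<Longrightarrow> ip z (F i) = 0"
    by (subst (asm) sum_nonneg_eq_0_iff) auto
  then have "\<And>i. i < N \<Longrightarrow> ip (F i) z = 0"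
    using ip_sym[of "F i" z for i] by simp
  moreover have "z \<in> vec.span (F ` {..<N})" using fr by (simp add: is_frame_def)
  ultimately have "ip z z = 0" by (rule ip_span_zero)
  then have "z = 0" by (simp add: ip_self)
  then show "x = y" by (simp add: z_def)
qed

lemma S_surj: "is_frame N F \<Longrightarrow> surj (frame_op ip N F)"
  by (rule vec.linear_inj_imp_surj[OF S_linear S_inj])


context
  fixes N :: nat and F :: "nat \<Rightarrow> 'k^'n"
  assumes fr: "is_frame N F"
begin

abbreviation "S \<equiv> frame_op ip N F"
abbreviation "Si \<equiv> inv (frame_op ip N F)"

lemma S_Si[simp]: "S (Si x) = x"
  using S_surj[OF fr] by (simp add: surj_f_inv_f)

lemma Si_S[simp]: "Si (S x) = x"
  using S_inj[OF fr] by (simp add: inv_f_f)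

lemma Si_add: "Si (x + y) = Si x + Si y"
  using S_inj[OF fr] by (rule injD) (simp add: S_add)

lemma Si_scale: "Si (a *s x) = a *s Si x"
  using S_inj[OF fr] by (rule injD) (simp add: S_scale)

lemma Si_zero[simp]: "Si 0 = 0"
  using Si_scale[of 0 0] by simp

lemma Si_sum: "Si (sum f A) = (\<Sum>x\<in>A. Si (f x))"
  by (induction A rule: infinite_finite_induct) (auto simp: Si_add)

lemma Si_selfadj: "ip (Si x) y = ip x (Si y)"
proof -
  have "ip (Si x) y = ip (Si x) (S (Si y))" by simp
  also have "\<dots> = ip (S (Si x)) (Si y)" by (simp only: S_selfadj)
  finally show ?thesis by simp
qed

lemma canon_D1: "f = (\<Sum>i<N. ip f (F i) *s canonical_dual ip N F i)"
proof -
  have "f = Si (S f)" by simp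
  also have "\<dots> = (\<Sum>i<N. ip f (F i) *s canonical_dual ip N F i)"
    by (simp add: frame_op_eq[of N F f] Si_sum Si_scale canonical_dual_def)
  finally show ?thesis .
qed

lemma canon_D2: "f = (\<Sum>i<N. ip f (canonical_dual ip N F i) *s F i)"
proof -
  have "S (Si f) = (\<Sum>i<N. ip (Si f) (F i) *s F i)" by (rule frame_op_eq)
  then show ?thesis by (simp add: Si_selfadj[of f] canonical_dual_def)
qed

lemma canon_dual: "is_dual ip N F (canonical_dual ip N F)"
proof -
  have "f \<in> vec.span (canonical_dual ip N F ` {..<N})" for f
  proof -
    have "(\<Sum>i<N. ip f (F i) *s canonical_dual ip N F i) \<in> vec.span (canonical_dual ip N F ` {..<N})"
      by (intro vec.span_sum vec.span_scale vec.span_base) auto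
    then show ?thesis using canon_D1[of f] by simp
  qed
  then show ?thesis
    unfolding is_dual_def is_frame_def using canon_D1 canon_D2 by auto
qed

end

lemma sum_delta_smult:
  fixes G :: "nat \<Rightarrow> 'k^'n"
  shows "(\<Sum>j<N. (if j = i then c j else 0) *s G j) = (if i < N then c i *s G i else 0)"
proof -
  have "\<And>j. (if j = i then c j else 0) *s G j = (if j = i then c i *s G i else 0)" by auto
  then show ?thesis by simp
qed

lemma op_eq:
  fixes F G :: "nat \<Rightarrow> 'k^'n"
  assumes "i < N"
  shows "(synthesis_op N G \<circ> diag1 m N p i \<circ> analysis_op ip N F)
     = (\<lambda>x. (of_real (weight m N p i) * ip x (F i)) *s G i)"
proof
  fix x
  have "(synthesis_op N G \<circ> diag1 m N p i \<circ> analysis_op ip N F) x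
     = (\<Sum>j<N. (if j = i then of_real (weight m N p i) * (if j < N then ip x (F j) else 0) else 0) *s G j)"
    by (simp add: synthesis_op_def diag1_def analysis_op_def)
  also have "\<dots> = (of_real (weight m N p i) * (if i < N then ip x (F i) else 0)) *s G i"
    using assms by (subst sum_delta_smult) simp
  finally show "(synthesis_op N G \<circ> diag1 m N p i \<circ> analysis_op ip N F) x
     = (of_real (weight m N p i) * ip x (F i)) *s G i" using assms by simp
qed

lemma rank1_bl:
  fixes f g :: "'k^'n"
  shows "bounded_linear (\<lambda>x. (c * ip x f) *s g)"
proof (rule bounded_linear_intro[where K = "norm c * norm f * norm g"])
  fix x y show "(c * ip (x + y) f) *s g = (c * ip x f) *s g + (c * ip y f) *s g"
    by (simp add: ip_add_left distrib_left vector_sadd_rdistrib)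
next
  fix r x show "(c * ip (r *\<^sub>R x) f) *s g = r *\<^sub>R ((c * ip x f) *s g)"
    by (simp add: scaleR_smult ip_scale_left vec.scale_scale mult.commute mult.left_commute)
next
  fix x show "norm ((c * ip x f) *s g) \<le> norm x * (norm c * norm f * norm g)"
  proof -
    have "norm ((c * ip x f) *s g) = norm c * norm (ip x f) * norm g"
      by (simp add: norm_smult norm_mult)
    also have "\<dots> \<le> norm c * (norm x * norm f) * norm g"
      by (intro mult_right_mono mult_left_mono ip_cs) auto
    finally show ?thesis by (simp add: algebra_simps)
  qed
qed

lemma rank1_onorm:
  fixes f g :: "'k^'n"
  shows "onorm (\<lambda>x. (c * ip x f) *s g) = norm c * norm f * norm g"
proof (rule antisym)
  show "onorm (\<lambda>x. (c * ip x f) *s g) \<le> norm c * norm f * norm g"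
  proof (rule onorm_le)
    fix x
    have "norm ((c * ip x f) *s g) = norm c * norm (ip x f) * norm g"
      by (simp add: norm_smult norm_mult)
    also have "\<dots> \<le> norm c * (norm x * norm f) * norm g"
      by (intro mult_right_mono mult_left_mono ip_cs) auto
    finally show "norm ((c * ip x f) *s g) \<le> norm c * norm f * norm g * norm x"
      by (simp add: algebra_simps)
  qed
next
  show "norm c * norm f * norm g \<le> onorm (\<lambda>x. (c * ip x f) *s g)"
  proof (cases "f = 0")
    case True
    then show ?thesis using onorm_pos_le[OF rank1_bl] by simp
  next
    case False
    have "norm ((c * ip f f) *s g) \<le> onorm (\<lambda>x. (c * ip x f) *s g) * norm f"
      using onorm[OF rank1_bl] .
    moreover have "norm ((c * ip f f) *s g) = (norm c * norm f * norm g) * norm f"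
      by (simp add: norm_smult norm_mult ip_self power2_eq_square)
    ultimately show ?thesis using False by (simp add: mult.commute mult.left_commute)
  qed
qed

lemma d1p_eq:
  fixes F G :: "nat \<Rightarrow> 'k^'n"
  shows "d1p ip N p F G = Max ((\<lambda>i. \<bar>weight CARD('n) N p i\<bar> * norm (F i) * norm (G i)) ` {..<N})"
  unfolding d1p_def
  by (intro arg_cong[where f=Max] image_cong refl) (simp add: op_eq rank1_onorm)


lemma span_sum_in:
  fixes F :: "nat \<Rightarrow> 'k^'n"
  shows "(\<Sum>i\<in>R. c i *s F i) \<in> vec.span (F ` R)"
  by (intro vec.span_sum vec.span_scale vec.span_base) auto

lemma aux_ab: "(a2::'a::ab_group_add) + a1 = b2 + b1 \<Longrightarrow> a1 - b1 = b2 - a2"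
  by (simp add: algebra_simps)

lemma key:
  fixes F G :: "nat \<Rightarrow> 'k^'n"
  assumes fr: "is_frame N F" and G: "is_dual ip N F G"
    and r1: "r1 \<subseteq> {..<N}" "r1 \<noteq> {}"
    and sp: "vec.span (F ` r1) \<inter> vec.span (F ` ({..<N} - r1)) = {0}"
  shows "\<exists>i\<in>r1. norm (canonical_dual ip N F i) \<le> norm (G i)"
proof -
  define v where "v = canonical_dual ip N F"
  have fin1: "finite r1" using r1 finite_subset by blast
  have A: "(\<Sum>i\<in>r1. ip f (G i) *s F i) = (\<Sum>i\<in>r1. ip f (v i) *s F i)" for f
  proof -
    let ?r2 = "{..<N} - r1"
    have e1: "f = (\<Sum>i\<in>?r2. ip f (G i) *s F i) + (\<Sum>i\<in>r1. ip f (G i) *s F i)"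
    proof -
      have "f = (\<Sum>i<N. ip f (G i) *s F i)" using G unfolding is_dual_def by blast
      also have "\<dots> = (\<Sum>i\<in>?r2. ip f (G i) *s F i) + (\<Sum>i\<in>r1. ip f (G i) *s F i)"
        by (rule sum.subset_diff[OF r1(1) finite_lessThan])
      finally show ?thesis .
    qed
    have e2: "f = (\<Sum>i\<in>?r2. ip f (v i) *s F i) + (\<Sum>i\<in>r1. ip f (v i) *s F i)"
    proof -
      have "f = (\<Sum>i<N. ip f (v i) *s F i)" using canon_D2[OF fr, of f] unfolding v_def .
      also have "\<dots> = (\<Sum>i\<in>?r2. ip f (v i) *s F i) + (\<Sum>i\<in>r1. ip f (v i) *s F i)"
        by (rule sum.subset_diff[OF r1(1) finite_lessThan])
      finally show ?thesis .
    qed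
    define d where "d = (\<Sum>i\<in>r1. ip f (G i) *s F i) - (\<Sum>i\<in>r1. ip f (v i) *s F i)"
    have d2: "d = (\<Sum>i\<in>?r2. ip f (v i) *s F i) - (\<Sum>i\<in>?r2. ip f (G i) *s F i)"
      using trans[OF sym[OF e1] e2] unfolding d_def by (rule aux_ab)
    have "d \<in> vec.span (F ` r1)" unfolding d_def by (intro vec.span_diff span_sum_in)
    moreover have "d \<in> vec.span (F ` ?r2)" unfolding d2 by (intro vec.span_diff span_sum_in)
    ultimately have "d = 0" using sp by blast
    then show ?thesis unfolding d_def by simp
  qed
  have B: "(\<Sum>i\<in>r1. ip f (G i) *s v i) = (\<Sum>i\<in>r1. ip f (v i) *s v i)" for f
  proof -
    have "Si N F (\<Sum>i\<in>r1. ip f (G i) *s F i) = Si N F (\<Sum>i\<in>r1. ip f (v i) *s F i)"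
      using A by simp
    then show ?thesis by (simp add: Si_sum[OF fr] Si_scale[OF fr] v_def canonical_dual_def)
  qed
  have C: "(\<Sum>i\<in>r1. cj (G i $ k) * v i $ k) = (\<Sum>i\<in>r1. cj (v i $ k) * v i $ k)" for k
    using arg_cong[OF B[of "axis k 1"], of "\<lambda>x. x $ k"] by (simp add: sum_component ip_axis_left)
  have D: "(\<Sum>i\<in>r1. ip (v i) (G i)) = (\<Sum>i\<in>r1. ip (v i) (v i))"
  proof -
    have "(\<Sum>i\<in>r1. ip (v i) (G i)) = (\<Sum>k\<in>UNIV. \<Sum>i\<in>r1. cj (G i $ k) * v i $ k)"
      unfolding ipg_def by (subst sum.swap) (simp add: mult.commute)
    also have "\<dots> = (\<Sum>k\<in>UNIV. \<Sum>i\<in>r1. cj (v i $ k) * v i $ k)" using C by simp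
    also have "\<dots> = (\<Sum>i\<in>r1. ip (v i) (v i))"
      unfolding ipg_def by (subst sum.swap) (simp add: mult.commute)
    finally show ?thesis .
  qed
  have E: "(\<Sum>i\<in>r1. inner (v i) (G i)) = (\<Sum>i\<in>r1. inner (v i) (v i))"
  proof -
    have "(\<Sum>i\<in>r1. inner (v i) (G i)) = re (\<Sum>i\<in>r1. ip (v i) (G i))" by (simp add: re_sum re_ip)
    also have "\<dots> = re (\<Sum>i\<in>r1. ip (v i) (v i))" using D by simp
    also have "\<dots> = (\<Sum>i\<in>r1. inner (v i) (v i))" by (simp add: re_sum re_ip)
    finally show ?thesis .
  qed
  have "\<exists>i\<in>r1. inner (v i) (v i) \<le> inner (v i) (G i)"
  proof (rule ccontr)
    assume "\<not> ?thesis"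
    then have "(\<Sum>i\<in>r1. inner (v i) (G i)) < (\<Sum>i\<in>r1. inner (v i) (v i))"
      using fin1 r1(2) by (intro sum_strict_mono) auto
    then show False using E by simp
  qed
  then obtain i where i: "i \<in> r1" "inner (v i) (v i) \<le> inner (v i) (G i)" by blast
  have "norm (v i) * norm (v i) \<le> norm (v i) * norm (G i)"
    using i(2) norm_cauchy_schwarz[of "v i" "G i"] by (simp add: power2_norm_eq_inner[symmetric] power2_eq_square)
  then have "norm (v i) \<le> norm (G i)"
    by (cases "norm (v i) = 0") (auto simp: mult_le_cancel_left)
  then show ?thesis using i(1) unfolding v_def by blast
qed


lemma main:
  fixes F :: "nat \<Rightarrow> 'k^'n"
  assumes N: "CARD('n) \<le> N" and fr: "is_frame N F" and ps: "prob_seq N p"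
    and nz: "\<forall>i<N. (\<Sum>j<N. p j) - p i \<noteq> 0" and sc: "split_condition ip N p F"
  shows "prob_optimal_dual ip N p F (canonical_dual ip N F)"
proof -
  define q where "q = weight CARD('n) N p"
  define v where "v = canonical_dual ip N F"
  define a where "a = (\<lambda>i. q i * norm (F i) * norm (v i))"
  define c where "c = Max (a ` {..<N})"
  define r1 where "r1 = {i\<in>{..<N}. a i = c}"
  have sp: "vec.span (F ` r1) \<inter> vec.span (F ` ({..<N} - r1)) = {0}"
    using sc unfolding split_condition_def Let_def a_def c_def r1_def v_def q_def by simp
  have Npos: "0 < N" using N by (metis less_le_trans zero_less_card_finite)
  have sum1: "(\<Sum>j<N. p j) = 1" using ps by (simp add: prob_seq_def)
  have qnn: "0 \<le> q i" if "i < N" for i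
  proof -
    have "p i \<le> 1" "1 - p i \<noteq> 0" using ps nz that sum1 by (auto simp: prob_seq_def)
    then have "0 < 1 - p i" by simp
    moreover have "0 \<le> real N - 1" using Npos by simp
    ultimately show ?thesis unfolding q_def weight_def sum1 by simp
  qed
  have ne: "{..<N} \<noteq> {}" using Npos by auto
  have "c \<in> a ` {..<N}" unfolding c_def using ne by (intro Max_in) auto
  then have r1ne: "r1 \<noteq> {}" unfolding r1_def by auto
  have r1sub: "r1 \<subseteq> {..<N}" unfolding r1_def by auto
  have dv: "d1p ip N p F v \<le> c"
  proof -
    have "d1p ip N p F v = Max ((\<lambda>i. \<bar>q i\<bar> * norm (F i) * norm (v i)) ` {..<N})"
      unfolding q_def by (rule d1p_eq)
    also have "\<dots> \<le> c"
    proof (rule Max.boundedI)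
      show "finite ((\<lambda>i. \<bar>q i\<bar> * norm (F i) * norm (v i)) ` {..<N})" by simp
      show "(\<lambda>i. \<bar>q i\<bar> * norm (F i) * norm (v i)) ` {..<N} \<noteq> {}" using ne by simp
      fix x assume "x \<in> (\<lambda>i. \<bar>q i\<bar> * norm (F i) * norm (v i)) ` {..<N}"
      then obtain i where i: "i < N" "x = \<bar>q i\<bar> * norm (F i) * norm (v i)" by auto
      then have "x = a i" using qnn[OF i(1)] by (simp add: a_def)
      also have "a i \<le> c" unfolding c_def using i(1) by (intro Max_ge) auto
      finally show "x \<le> c" .
    qed
    finally show ?thesis .
  qed
  have lower: "c \<le> d1p ip N p F G" if G: "is_dual ip N F G" for G
  proof -
    obtain i where i: "i \<in> r1" "norm (v i) \<le> norm (G i)"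
      using key[OF fr G r1sub r1ne sp] unfolding v_def by blast
    have iN: "i < N" using i(1) r1sub by auto
    have "c = q i * norm (F i) * norm (v i)" using i(1) unfolding r1_def a_def by simp
    also have "\<dots> \<le> \<bar>q i\<bar> * norm (F i) * norm (G i)"
      using qnn[OF iN] i(2) by (simp add: mult_left_mono)
    also have "\<dots> \<le> Max ((\<lambda>i. \<bar>q i\<bar> * norm (F i) * norm (G i)) ` {..<N})"
      using iN by (intro Max_ge) auto
    also have "\<dots> = d1p ip N p F G" unfolding q_def by (rule d1p_eq[symmetric])
    finally show ?thesis .
  qed
  have cd: "is_dual ip N F v" unfolding v_def by (rule canon_dual[OF fr])
  have "Inf {d1p ip N p F G' | G'. is_dual ip N F G'} = d1p ip N p F v"
  proof (rule cInf_eq_minimum)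
    show "d1p ip N p F v \<in> {d1p ip N p F G' | G'. is_dual ip N F G'}" using cd by blast
    fix y assume "y \<in> {d1p ip N p F G' | G'. is_dual ip N F G'}"
    then obtain G where "is_dual ip N F G" "y = d1p ip N p F G" by blast
    then show "d1p ip N p F v \<le> y" using dv lower by fastforce
  qed
  then show ?thesis unfolding prob_optimal_dual_def v_def[symmetric] using cd by simp
qed

end

lemma conjf_real: "conjf (id :: real \<Rightarrow> real) id"
  by unfold_locales (auto simp: power2_eq_square)

lemma cx_sq: "a * cnj a = complex_of_real (cmod a ^ 2)"
  by (rule complex_norm_square[symmetric])

lemma conjf_complex: "conjf cnj Re"
proof unfold_locales
  fix a :: complex show "a * cnj a = of_real (norm a ^ 2)" by (rule cx_sq)
qed (auto simp: inner_complex_def)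

lemma rip_eq: "rip = ipg id"
  by (intro ext) (simp add: rip_def ipg_def)

lemma cip_eq: "cip = ipg cnj"
  by (intro ext) (simp add: cip_def ipg_def)

theorem proposition4p1:
  fixes N :: nat
  shows
  "(\<forall>(F :: nat \<Rightarrow> real^'n) (p :: nat \<Rightarrow> real).
      CARD('n) \<le> N \<and> is_frame N F \<and> prob_seq N p \<and>
      (\<forall>i<N. (\<Sum>j<N. p j) - p i \<noteq> 0) \<and> split_condition rip N p F
      \<longrightarrow> prob_optimal_dual rip N p F (canonical_dual rip N F))
   \<and>
   (\<forall>(F :: nat \<Rightarrow> complex^'n) (p :: nat \<Rightarrow> real).
      CARD('n) \<le> N \<and> is_frame N F \<and> prob_seq N p \<and>
      (\<forall>i<N. (\<Sum>j<N. p j) - p i \<noteq> 0) \<and> split_condition cip N p F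
      \<longrightarrow> prob_optimal_dual cip N p F (canonical_dual cip N F))"
  unfolding rip_eq cip_eq
  using conjf.main[OF conjf_real] conjf.main[OF conjf_complex] by blast

end
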